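(* Let $G=\langle V,E\rangle$ be a directed graph with non-empty finite sets of vertices $V$ (object constants) and edges $E\subseteq V\times V$, where every vertex occurs in some edge, and let $\mathcal{I}$ be a Herbrand interpretation over the signature $\{\mathit{in}\}$. Then $\mathcal{I}$ is an answer set of the modular program $\Pi_1(E)$ if and only if $\mathit{in}^{\mathcal{I}}$ is (the edge set of) a Hamiltonian cycle of $G$, i.e. the elements of $\mathit{in}^{\mathcal{I}}$ can be arranged as a directed cycle $(v_1,v_2),\dots,(v_n,v_1)$ with $v_1,\dots,v_n$ pairwise distinct and $\{v_1,\dots,v_n\}=V$.
   Context: Formulas: (F1) $\forall xy(\mathit{edge}(x,y)\to\mathit{vertex}(x))$; (F2) $\forall xy(\mathit{edge}(y,x)\to\mathit{vertex}(x))$; (F3) $\forall xy(\neg\neg\mathit{in}(x,y)\wedge\mathit{edge}(x,y)\to\mathit{in}(x,y))$; (F4) $\forall xy(\mathit{in}(x,y)\to r(x,y))$; (F5) $\forall xyz(r(x,z)\wedge r(z,y)\to r(x,y))$; (F6) $\forall xy(\neg r(x,y)\wedge\mathit{vertex}(x)\wedge\mathit{vertex}(y)\to\bot)$; (F7) $\forall xyz(\mathit{in}(x,y)\wedge\mathit{in}(x,z)\wedge\neg(y=z)\to\bot)$. $\neg G$ abbreviates $G\to\bot$. $\mathrm{SM}_{\vec{p}}[F]:=F\wedge\neg\exists\vec{U}((\vec{U}<\vec{p})\wedge F^* )$ with fresh predicate variables $\vec{U}$, where $\vec{U}<\vec{p}$ means $\bigwedge_i\forall\vec{x}(U_i(\vec{x})\to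 p_i(\vec{x}))\wedge\neg\bigwedge_i\forall\vec{x}(p_i(\vec{x})\to U_i(\vec{x}))$, and $F^*$: $F^*=F$ for atomic $F$ without members of $\vec{p}$; $p_i(\vec{t})^*=U_i(\vec{t})$; $(G\otimes H)^*=G^*\otimes H^*$ for $\otimes\in\{\wedge,\vee\}$; $(G\to H)^*=(G^*\to H^* )\wedge(G\to H)$; $(Qx\,G)^*=Qx\,G^*$. A def-module $(\vec{p}:F)$ has $\Phi((\vec{p}:F))=\mathrm{SM}_{\vec{p}}[F]$; a bare formula $F$ as a module means $(\emptyset:F)$ with $\Phi=F$. A modular program $\Pi=\langle\mathcal{S},\mathcal{M}\rangle$ has public predicates $\mathcal{S}$ and modules $\mathcal{M}$ (def-modules or modular programs), with $\Phi(\Pi)=\exists\vec{h}\bigwedge_{M\in\mathcal{M}}\Phi(M)$, $\vec{h}$ the free predicate symbols of the $\Phi(M)$ not in $\mathcal{S}$. An answer set of $\Pi$ is a Herbrand interpretation over $\mathcal{S}$ satisfying $\Phi(\Pi)$. Define $\Pi_{cn}=\langle\{\mathit{vertex},\mathit{in}\},\{(r:\mathrm{F4}\wedge\mathrm{F5}),\mathrm{F6}\}\rangle$, $\Pi_{hc}=\langle\{\mathit{vertex},\mathit{in}\},\{\Pi_{cn},\mathrm{F7}\}\rangle$, $\Pi_{sg}=\langle\{\mathit{vertex},\mathit{edge},\mathit{in}\},\{(\mathit{vertex}:\mathrm{F1}\wedge\mathrm{F2}),(\mathit{in}:\mathrm{F3})\}\rangle$, $\Pi_1=\langle\{\mathit{edge},\mathit{in}\},\{\Pi_{sg},\Pi_{hc}\}\rangle$,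 $M_E=(\mathit{edge}:\bigwedge\{\mathit{edge}(a,b)\mid(a,b)\in E\})$, and $\Pi_1(E)=\langle\{\mathit{in}\},\{\Pi_1,M_E\}\rangle$. *)

theory Defs
  imports Main
begin

datatype 'a trm = Var nat | Cst 'a

datatype ('p, 'a) form =
    Atom 'p "'a trm list"
  | Eq "'a trm" "'a trm"
  | Bot
  | Conj "('p, 'a) form" "('p, 'a) form"
  | Disj "('p, 'a) form" "('p, 'a) form"
  | Imp "('p, 'a) form" "('p, 'a) form"
  | All nat "('p, 'a) form"
  | Ex nat "('p, 'a) form"

definition Neg :: "('p, 'a) form \<Rightarrow> ('p, 'a) form" where
  "Neg G = Imp G Bot"

definition Top :: "('p, 'a) form" where
  "Top = Imp Bot Bot"

fun tval :: "(nat \<Rightarrow> 'a) \<Rightarrow> 'a trm \<Rightarrow> 'a" where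
  "tval \<sigma> (Var n) = \<sigma> n"
| "tval \<sigma> (Cst c) = c"

text \<open>Satisfaction; D is the Herbrand universe (the object constants), I interprets
  each predicate symbol as a set of tuples (lists), \<sigma> assigns object variables.
  Equality is identity (Herbrand interpretations: distinct constants denote distinct objects).\<close>
fun sat :: "'a set \<Rightarrow> ('p \<Rightarrow> 'a list set) \<Rightarrow> (nat \<Rightarrow> 'a) \<Rightarrow> ('p, 'a) form \<Rightarrow> bool" where
  "sat D I \<sigma> (Atom p ts) = (map (tval \<sigma>) ts \<in> I p)"
| "sat D I \<sigma> (Eq s t) = (tval \<sigma> s = tval \<sigma> t)"
| "sat D I \<sigma> Bot = False"
| "sat D I \<sigma> (Conj G H) = (sat D I \<sigma> G \<and> sat D I \<sigma> H)"
| "sat D I \<sigma> (Disj G H) = (sat D I \<sigma> G \<or> sat D I \<sigma> H)"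
| "sat D I \<sigma> (Imp G H) = (sat D I \<sigma> G \<longrightarrow> sat D I \<sigma> H)"
| "sat D I \<sigma> (All x G) = (\<forall>d\<in>D. sat D I (\<sigma>(x := d)) G)"
| "sat D I \<sigma> (Ex x G) = (\<exists>d\<in>D. sat D I (\<sigma>(x := d)) G)"

text \<open>Satisfaction of F* (for intensional predicates ps replaced by the predicate
  variables U), following the recursive clauses of the paper.\<close>
fun sat_star :: "'a set \<Rightarrow> ('p \<Rightarrow> 'a list set) \<Rightarrow> 'p set \<Rightarrow> ('p \<Rightarrow> 'a list set)
                  \<Rightarrow> (nat \<Rightarrow> 'a) \<Rightarrow> ('p, 'a) form \<Rightarrow> bool" where
  "sat_star D I ps U \<sigma> (Atom p ts) =
     (if p \<in> ps then map (tval \<sigma>) ts \<in> U p else map (tval \<sigma>) ts \<in> I p)"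
| "sat_star D I ps U \<sigma> (Eq s t) = (tval \<sigma> s = tval \<sigma> t)"
| "sat_star D I ps U \<sigma> Bot = False"
| "sat_star D I ps U \<sigma> (Conj G H) = (sat_star D I ps U \<sigma> G \<and> sat_star D I ps U \<sigma> H)"
| "sat_star D I ps U \<sigma> (Disj G H) = (sat_star D I ps U \<sigma> G \<or> sat_star D I ps U \<sigma> H)"
| "sat_star D I ps U \<sigma> (Imp G H) =
     ((sat_star D I ps U \<sigma> G \<longrightarrow> sat_star D I ps U \<sigma> H) \<and> (sat D I \<sigma> G \<longrightarrow> sat D I \<sigma> H))"
| "sat_star D I ps U \<sigma> (All x G) = (\<forall>d\<in>D. sat_star D I ps U (\<sigma>(x := d)) G)"
| "sat_star D I ps U \<sigma> (Ex x G) = (\<exists>d\<in>D. sat_star D I ps U (\<sigma>(x := d)) G)"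

definition holds :: "'a set \<Rightarrow> ('p \<Rightarrow> 'a list set) \<Rightarrow> ('p, 'a) form \<Rightarrow> bool" where
  "holds D I F = (\<forall>\<sigma>. range \<sigma> \<subseteq> D \<longrightarrow> sat D I \<sigma> F)"

definition holds_star :: "'a set \<Rightarrow> ('p \<Rightarrow> 'a list set) \<Rightarrow> 'p set \<Rightarrow> ('p \<Rightarrow> 'a list set)
                          \<Rightarrow> ('p, 'a) form \<Rightarrow> bool" where
  "holds_star D I ps U F = (\<forall>\<sigma>. range \<sigma> \<subseteq> D \<longrightarrow> sat_star D I ps U \<sigma> F)"

definition pred_less :: "'p set \<Rightarrow> ('p \<Rightarrow> 'a list set) \<Rightarrow> ('p \<Rightarrow> 'a list set) \<Rightarrow> bool" where
  "pred_less ps U I = ((\<forall>p\<in>ps. U p \<subseteq> I p) \<and> \<not> (\<forall>p\<in>ps. I p \<subseteq> U p))"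

definition rel_interp :: "'a set \<Rightarrow> ('p \<Rightarrow> nat) \<Rightarrow> ('p \<Rightarrow> 'a list set) \<Rightarrow> bool" where
  "rel_interp D ar I = (\<forall>q. I q \<subseteq> {xs. length xs = ar q \<and> set xs \<subseteq> D})"

text \<open>SM_ps[F]; the second-order quantifier over U ranges over relations on D of the
  right arities.\<close>
definition SM :: "'a set \<Rightarrow> ('p \<Rightarrow> nat) \<Rightarrow> 'p set \<Rightarrow> ('p, 'a) form \<Rightarrow> ('p \<Rightarrow> 'a list set) \<Rightarrow> bool" where
  "SM D ar ps F I = (holds D I F \<and>
     \<not> (\<exists>U. rel_interp D ar U \<and> pred_less ps U I \<and> holds_star D I ps U F))"

fun preds :: "('p, 'a) form \<Rightarrow> 'p set" where
  "preds (Atom p ts) = {p}"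
| "preds (Eq s t) = {}"
| "preds Bot = {}"
| "preds (Conj G H) = preds G \<union> preds H"
| "preds (Disj G H) = preds G \<union> preds H"
| "preds (Imp G H) = preds G \<union> preds H"
| "preds (All x G) = preds G"
| "preds (Ex x G) = preds G"

datatype ('p, 'a) module =
    FormM "('p, 'a) form"
  | DefM "'p set" "('p, 'a) form"
  | ProgM "'p set" "('p, 'a) module list"

fun fpreds :: "('p, 'a) module \<Rightarrow> 'p set" where
  "fpreds (FormM F) = preds F"
| "fpreds (DefM ps F) = ps \<union> preds F"
| "fpreds (ProgM S Ms) = (\<Union>M\<in>set Ms. fpreds M) \<inter> S"

text \<open>Phi(M) evaluated in an interpretation I; the existential second-order quantifier over
  hidden predicates h ranges over relations on D of the right arities.\<close>
fun phi :: "'a set \<Rightarrow> ('p \<Rightarrow> nat) \<Rightarrow> ('p, 'a) module \<Rightarrow> ('p \<Rightarrow> 'a list set) \<Rightarrow> bool" where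
  "phi D ar (FormM F) I = holds D I F"
| "phi D ar (DefM ps F) I = SM D ar ps F I"
| "phi D ar (ProgM S Ms) I =
     (\<exists>J. rel_interp D ar J \<and>
          (\<forall>q. q \<notin> (\<Union>M\<in>set Ms. fpreds M) - S \<longrightarrow> J q = I q) \<and>
          (\<forall>M\<in>set Ms. phi D ar M J))"

text \<open>Herbrand interpretation over the signature S (predicates outside S are uninterpreted,
  represented as empty).\<close>
definition herbrand_over :: "'a set \<Rightarrow> ('p \<Rightarrow> nat) \<Rightarrow> 'p set \<Rightarrow> ('p \<Rightarrow> 'a list set) \<Rightarrow> bool" where
  "herbrand_over D ar S I = (rel_interp D ar I \<and> (\<forall>q. q \<notin> S \<longrightarrow> I q = {}))"

fun publics :: "('p, 'a) module \<Rightarrow> 'p set" where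
  "publics (ProgM S Ms) = S"
| "publics (DefM ps F) = {}"
| "publics (FormM F) = {}"

definition answer_set :: "'a set \<Rightarrow> ('p \<Rightarrow> nat) \<Rightarrow> ('p, 'a) module \<Rightarrow> ('p \<Rightarrow> 'a list set) \<Rightarrow> bool" where
  "answer_set D ar P I = (herbrand_over D ar (publics P) I \<and> phi D ar P I)"

datatype pred = Edge | Vertex | In | R

fun arity :: "pred \<Rightarrow> nat" where
  "arity Edge = 2" | "arity Vertex = 1" | "arity In = 2" | "arity R = 2"

abbreviation "vx \<equiv> Var 0"
abbreviation "vy \<equiv> Var 1"
abbreviation "vz \<equiv> Var 2"

definition F1 :: "(pred, 'a) form" where
  "F1 = All 0 (All 1 (Imp (Atom Edge [vx, vy]) (Atom Vertex [vx])))"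
definition F2 :: "(pred, 'a) form" where
  "F2 = All 0 (All 1 (Imp (Atom Edge [vy, vx]) (Atom Vertex [vx])))"
definition F3 :: "(pred, 'a) form" where
  "F3 = All 0 (All 1 (Imp (Conj (Neg (Neg (Atom In [vx, vy]))) (Atom Edge [vx, vy]))
                           (Atom In [vx, vy])))"
definition F4 :: "(pred, 'a) form" where
  "F4 = All 0 (All 1 (Imp (Atom In [vx, vy]) (Atom R [vx, vy])))"
definition F5 :: "(pred, 'a) form" where
  "F5 = All 0 (All 1 (All 2 (Imp (Conj (Atom R [vx, vz]) (Atom R [vz, vy])) (Atom R [vx, vy]))))"
definition F6 :: "(pred, 'a) form" where
  "F6 = All 0 (All 1 (Imp (Conj (Conj (Neg (Atom R [vx, vy])) (Atom Vertex [vx])) (Atom Vertex [vy]))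
                           Bot))"
definition F7 :: "(pred, 'a) form" where
  "F7 = All 0 (All 1 (All 2 (Imp (Conj (Conj (Atom In [vx, vy]) (Atom In [vx, vz])) (Neg (Eq vy vz)))
                                Bot)))"

definition Pi_cn :: "(pred, 'a) module" where
  "Pi_cn = ProgM {Vertex, In} [DefM {R} (Conj F4 F5), FormM F6]"
definition Pi_hc :: "(pred, 'a) module" where
  "Pi_hc = ProgM {Vertex, In} [Pi_cn, FormM F7]"
definition Pi_sg :: "(pred, 'a) module" where
  "Pi_sg = ProgM {Vertex, Edge, In} [DefM {Vertex} (Conj F1 F2), DefM {In} F3]"
definition Pi_1 :: "(pred, 'a) module" where
  "Pi_1 = ProgM {Edge, In} [Pi_sg, Pi_hc]"

text \<open>Conjunction of the ground facts edge(a,b), (a,b) in E (E finite; listed in some order,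
  terminated by the trivially true formula Top).\<close>
definition edge_facts :: "('a \<times> 'a) set \<Rightarrow> (pred, 'a) form" where
  "edge_facts E = foldr Conj (map (\<lambda>(a, b). Atom Edge [Cst a, Cst b]) (SOME xs. set xs = E)) Top"

definition M_E :: "('a \<times> 'a) set \<Rightarrow> (pred, 'a) module" where
  "M_E E = DefM {Edge} (edge_facts E)"

definition Pi_1E :: "('a \<times> 'a) set \<Rightarrow> (pred, 'a) module" where
  "Pi_1E E = ProgM {In} [Pi_1, M_E E]"

definition ham_cycle :: "'a set \<Rightarrow> ('a \<times> 'a) set \<Rightarrow> ('a \<times> 'a) set \<Rightarrow> bool" where
  "ham_cycle V E C = (C \<subseteq> E \<and> (\<exists>vs. vs \<noteq> [] \<and> distinct vs \<and> set vs = V \<and>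
       C = {(vs ! i, vs ! ((i + 1) mod length vs)) | i. i < length vs}))"

end

theory Submission
  imports Defs
begin


definition relOf :: "'a list set \<Rightarrow> ('a \<times> 'a) set" where
  "relOf S = {(x,y). [x,y] \<in> S}"
definition lift2 :: "('a \<times> 'a) set \<Rightarrow> 'a list set" where
  "lift2 T = {[x,y] | x y. (x,y) \<in> T}"

lemma len2: "length xs = 2 \<Longrightarrow> \<exists>x y. xs = [x,y]"
  by (cases xs; cases "tl xs"; auto simp: numeral_2_eq_2)
lemma len1: "length xs = 1 \<Longrightarrow> \<exists>x. xs = [x]"
  by (cases xs; auto)

lemma ri2:
  assumes "rel_interp V arity J" "arity q = 2"
  shows "J q = lift2 (relOf (J q))" "relOf (J q) \<subseteq> V \<times> V"
proof -
  have s: "J q \<subseteq> {xs. length xs = 2 \<and> set xs \<subseteq> V}" using assms unfolding rel_interp_def by metis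
  show "J q = lift2 (relOf (J q))"
  proof
    show "J q \<subseteq> lift2 (relOf (J q))" using s len2 unfolding lift2_def relOf_def by fastforce
  qed (auto simp: lift2_def relOf_def)
  show "relOf (J q) \<subseteq> V \<times> V" using s unfolding relOf_def by auto
qed

lemma ri1:
  assumes "rel_interp V arity J" "arity q = 1" "xs \<in> J q"
  shows "\<exists>v\<in>V. xs = [v]"
  using assms len1 unfolding rel_interp_def by (metis (mono_tags, lifting) in_mono list.set_intros(1) mem_Collect_eq subsetD)

lemma holds_const:
  assumes "V \<noteq> {}" "\<And>\<sigma>. range \<sigma> \<subseteq> V \<Longrightarrow> sat V J \<sigma> F = P"
  shows "holds V J F = P"
proof -
  obtain v where "v \<in> V" using assms by auto
  hence "range (\<lambda>_. v) \<subseteq> V" by auto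
  thus ?thesis using assms unfolding holds_def by metis
qed

lemma holds_star_const:
  assumes "V \<noteq> {}" "\<And>\<sigma>. range \<sigma> \<subseteq> V \<Longrightarrow> sat_star V J ps U \<sigma> F = P"
  shows "holds_star V J ps U F = P"
proof -
  obtain v where "v \<in> V" using assms by auto
  hence "range (\<lambda>_. v) \<subseteq> V" by auto
  thus ?thesis using assms unfolding holds_star_def by metis
qed

lemma hF1: "V \<noteq> {} \<Longrightarrow> holds V J F1 = (\<forall>x\<in>V. \<forall>y\<in>V. [x,y] \<in> J Edge \<longrightarrow> [x] \<in> J Vertex)"
  by (rule holds_const) (auto simp: F1_def)
lemma hF2: "V \<noteq> {} \<Longrightarrow> holds V J F2 = (\<forall>x\<in>V. \<forall>y\<in>V. [y,x] \<in> J Edge \<longrightarrow> [x] \<in> J Vertex)"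
  by (rule holds_const) (auto simp: F2_def)
lemma hsF1: "V \<noteq> {} \<Longrightarrow> holds_star V J {Vertex} U F1 = (\<forall>x\<in>V. \<forall>y\<in>V. [x,y] \<in> J Edge \<longrightarrow> [x] \<in> U Vertex \<and> [x] \<in> J Vertex)"
  by (rule holds_star_const) (auto simp: F1_def)
lemma hsF2: "V \<noteq> {} \<Longrightarrow> holds_star V J {Vertex} U F2 = (\<forall>x\<in>V. \<forall>y\<in>V. [y,x] \<in> J Edge \<longrightarrow> [x] \<in> U Vertex \<and> [x] \<in> J Vertex)"
  by (rule holds_star_const) (auto simp: F2_def)
lemma hF3: "V \<noteq> {} \<Longrightarrow> holds V J F3"
  by (subst holds_const[where P=True]) (auto simp: F3_def Neg_def)
lemma hsF3: "V \<noteq> {} \<Longrightarrow> holds_star V J {In} U F3 = (\<forall>x\<in>V. \<forall>y\<in>V. [x,y] \<in> J In \<and> [x,y] \<in> J Edge \<longrightarrow> [x,y] \<in> U In)"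
  by (rule holds_star_const) (auto simp: F3_def Neg_def)
lemma hF4: "V \<noteq> {} \<Longrightarrow> holds V J F4 = (\<forall>x\<in>V. \<forall>y\<in>V. [x,y] \<in> J In \<longrightarrow> [x,y] \<in> J R)"
  by (rule holds_const) (auto simp: F4_def)
lemma hsF4: "V \<noteq> {} \<Longrightarrow> holds_star V J {R} U F4 = (\<forall>x\<in>V. \<forall>y\<in>V. [x,y] \<in> J In \<longrightarrow> [x,y] \<in> U R \<and> [x,y] \<in> J R)"
  by (rule holds_star_const) (auto simp: F4_def)
lemma hF5: "V \<noteq> {} \<Longrightarrow> holds V J F5 = (\<forall>x\<in>V. \<forall>y\<in>V. \<forall>z\<in>V. [x,z] \<in> J R \<and> [z,y] \<in> J R \<longrightarrow> [x,y] \<in> J R)"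
  by (rule holds_const) (auto simp: F5_def)
lemma hsF5: "V \<noteq> {} \<Longrightarrow> holds_star V J {R} U F5 = (\<forall>x\<in>V. \<forall>y\<in>V. \<forall>z\<in>V. ([x,z] \<in> U R \<and> [z,y] \<in> U R \<longrightarrow> [x,y] \<in> U R) \<and> ([x,z] \<in> J R \<and> [z,y] \<in> J R \<longrightarrow> [x,y] \<in> J R))"
  by (rule holds_star_const) (auto simp: F5_def)
lemma hF6: "V \<noteq> {} \<Longrightarrow> holds V J F6 = (\<forall>x\<in>V. \<forall>y\<in>V. [x] \<in> J Vertex \<and> [y] \<in> J Vertex \<longrightarrow> [x,y] \<in> J R)"
  by (rule holds_const) (auto simp: F6_def Neg_def)
lemma hF7: "V \<noteq> {} \<Longrightarrow> holds V J F7 = (\<forall>x\<in>V. \<forall>y\<in>V. \<forall>z\<in>V. [x,y] \<in> J In \<and> [x,z] \<in> J In \<longrightarrow> y = z)"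
  by (rule holds_const) (auto simp: F7_def Neg_def)

lemma holds_Conj: "holds V J (Conj A B) = (holds V J A \<and> holds V J B)"
  unfolding holds_def by auto
lemma holds_star_Conj: "holds_star V J ps U (Conj A B) = (holds_star V J ps U A \<and> holds_star V J ps U B)"
  unfolding holds_star_def by auto



lemma lift2_mem[simp]: "([x,y] \<in> lift2 S) = ((x,y) \<in> S)"
  unfolding lift2_def by auto
lemma relOf_mem[simp]: "((x,y) \<in> relOf S) = ([x,y] \<in> S)"
  unfolding relOf_def by auto
lemma lift2_mono: "S \<subseteq> T \<Longrightarrow> lift2 S \<subseteq> lift2 T"
  unfolding lift2_def by auto

lemma pred_less1: "pred_less {p} U J = (U p \<subseteq> J p \<and> \<not> J p \<subseteq> U p)"
  unfolding pred_less_def by auto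

lemma ri_upd: "rel_interp V arity J \<Longrightarrow> S \<subseteq> {xs. length xs = arity q \<and> set xs \<subseteq> V} \<Longrightarrow> rel_interp V arity (J(q := S))"
  unfolding rel_interp_def by auto

lemma lift2_sub: "T \<subseteq> V \<times> V \<Longrightarrow> lift2 T \<subseteq> {xs. length xs = 2 \<and> set xs \<subseteq> V}"
  unfolding lift2_def by auto

lemma ri2':
  assumes "rel_interp V arity J" "arity q = 2" "xs \<in> J q"
  shows "\<exists>x y. xs = [x,y] \<and> x \<in> V \<and> y \<in> V"
proof -
  have "xs \<in> {xs. length xs = arity q \<and> set xs \<subseteq> V}" using assms unfolding rel_interp_def by blast
  hence "length xs = 2" "set xs \<subseteq> V" using assms(2) by auto
  thus ?thesis using len2 by fastforce
qed

lemma SM_Vertex: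
  assumes ri: "rel_interp V arity J" and ne: "V \<noteq> {}"
    and ends: "\<forall>v\<in>V. \<exists>w\<in>V. [v,w]\<in>J Edge \<or> [w,v]\<in>J Edge"
  shows "SM V arity {Vertex} (Conj F1 F2) J \<longleftrightarrow> J Vertex = {[v] | v. v \<in> V}"
proof -
  have sub: "J Vertex \<subseteq> {[v] | v. v \<in> V}"
  proof
    fix xs assume "xs \<in> J Vertex"
    then obtain v where "v \<in> V" "xs = [v]" using ri1[OF ri, of Vertex] by auto
    thus "xs \<in> {[v] | v. v \<in> V}" by blast
  qed
  have key: "{[v] | v. v \<in> V} \<subseteq> S"
    if 1: "\<forall>x\<in>V. \<forall>y\<in>V. [x,y] \<in> J Edge \<longrightarrow> [x] \<in> S"
    and 2: "\<forall>x\<in>V. \<forall>y\<in>V. [y,x] \<in> J Edge \<longrightarrow> [x] \<in> S" for S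
  proof
    fix xs assume "xs \<in> {[v] | v. v \<in> V}"
    then obtain v where v: "v \<in> V" "xs = [v]" by blast
    then obtain w where "w \<in> V" "[v,w]\<in>J Edge \<or> [w,v]\<in>J Edge" using ends by blast
    thus "xs \<in> S" using 1 2 v by blast
  qed
  show ?thesis
  proof
    assume "SM V arity {Vertex} (Conj F1 F2) J"
    hence "holds V J F1" "holds V J F2" unfolding SM_def holds_Conj by auto
    hence "{[v] | v. v \<in> V} \<subseteq> J Vertex" using key unfolding hF1[OF ne] hF2[OF ne] by blast
    thus "J Vertex = {[v] | v. v \<in> V}" using sub by auto
  next
    assume eq: "J Vertex = {[v] | v. v \<in> V}"
    have h: "holds V J (Conj F1 F2)" unfolding holds_Conj hF1[OF ne] hF2[OF ne] eq by blast
    have "\<not> (rel_interp V arity U \<and> pred_less {Vertex} U J \<and> holds_star V J {Vertex} U (Conj F1 F2))" for U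
    proof
      assume a: "rel_interp V arity U \<and> pred_less {Vertex} U J \<and> holds_star V J {Vertex} U (Conj F1 F2)"
      hence "holds_star V J {Vertex} U F1" "holds_star V J {Vertex} U F2" by (auto simp: holds_star_Conj)
      hence "\<forall>x\<in>V. \<forall>y\<in>V. [x,y] \<in> J Edge \<longrightarrow> [x] \<in> U Vertex"
        "\<forall>x\<in>V. \<forall>y\<in>V. [y,x] \<in> J Edge \<longrightarrow> [x] \<in> U Vertex"
        unfolding hsF1[OF ne] hsF2[OF ne] by blast+
      hence "{[v] | v. v \<in> V} \<subseteq> U Vertex" using key by blast
      thus False using a eq unfolding pred_less1 by blast
    qed
    thus "SM V arity {Vertex} (Conj F1 F2) J" using h unfolding SM_def by blast
  qed
qed

lemma SM_In:
  assumes ri: "rel_interp V arity J" and ne: "V \<noteq> {}"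
  shows "SM V arity {In} F3 J \<longleftrightarrow> relOf (J In) \<subseteq> relOf (J Edge)"
proof
  assume sm: "SM V arity {In} F3 J"
  show "relOf (J In) \<subseteq> relOf (J Edge)"
  proof (rule ccontr)
    assume n: "\<not> ?thesis"
    define U where "U = J(In := J In \<inter> J Edge)"
    have "rel_interp V arity U" unfolding U_def using ri by (rule ri_upd) (use ri in \<open>unfold rel_interp_def, blast\<close>)
    moreover have "pred_less {In} U J" using n by (auto simp: pred_less1 U_def relOf_def)
    moreover have "holds_star V J {In} U F3" by (auto simp: hsF3[OF ne] U_def)
    ultimately show False using sm unfolding SM_def by blast
  qed
next
  assume s: "relOf (J In) \<subseteq> relOf (J Edge)"
  have "\<not> (rel_interp V arity U \<and> pred_less {In} U J \<and> holds_star V J {In} U F3)" for U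
  proof
    assume a: "rel_interp V arity U \<and> pred_less {In} U J \<and> holds_star V J {In} U F3"
    have "J In \<subseteq> U In"
    proof
      fix xs assume xs: "xs \<in> J In"
      then obtain x y where xy: "xs = [x,y]" "x \<in> V" "y \<in> V" using ri2'[OF ri arity.simps(3) xs] by auto
      have "(x,y) \<in> relOf (J Edge)" using s xs xy unfolding relOf_def by blast
      hence "[x,y] \<in> J Edge" by simp
      moreover have "\<forall>x\<in>V. \<forall>y\<in>V. [x,y] \<in> J In \<and> [x,y] \<in> J Edge \<longrightarrow> [x,y] \<in> U In"
        using a hsF3[OF ne] by blast
      ultimately show "xs \<in> U In" using xy xs by blast
    qed
    thus False using a by (auto simp: pred_less1)
  qed
  thus "SM V arity {In} F3 J" using hF3[OF ne] unfolding SM_def by blast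
qed

lemma tr_min: assumes "T \<subseteq> S" "trans S" shows "T\<^sup>+ \<subseteq> S"
proof -
  have "T\<^sup>+ \<subseteq> S\<^sup>+" by (rule trancl_mono_subset) fact
  also have "S\<^sup>+ = S" by (rule trancl_id) fact
  finally show ?thesis .
qed

lemma SM_R:
  assumes ri: "rel_interp V arity J" and ne: "V \<noteq> {}"
  shows "SM V arity {R} (Conj F4 F5) J \<longleftrightarrow> J R = lift2 ((relOf (J In))\<^sup>+)"
proof -
  let ?T = "relOf (J In)"
  have TV: "?T \<subseteq> V \<times> V" using ri2(2)[OF ri, of In] by simp
  hence TpV: "?T\<^sup>+ \<subseteq> V \<times> V" using trancl_subset_Sigma by blast
  have RV: "relOf (J R) \<subseteq> V \<times> V" using ri2(2)[OF ri, of R] by simp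
  have Req: "J R = lift2 (relOf (J R))" by (rule ri2(1)[OF ri]) simp
  show ?thesis
  proof
    assume sm: "SM V arity {R} (Conj F4 F5) J"
    hence h4: "holds V J F4" and h5: "holds V J F5" unfolding SM_def holds_Conj by auto
    have a4: "\<forall>x\<in>V. \<forall>y\<in>V. [x,y] \<in> J In \<longrightarrow> [x,y] \<in> J R" using h4 unfolding hF4[OF ne] .
    have a5: "\<forall>x\<in>V. \<forall>y\<in>V. \<forall>z\<in>V. [x,z] \<in> J R \<and> [z,y] \<in> J R \<longrightarrow> [x,y] \<in> J R"
      using h5 unfolding hF5[OF ne] .
    have "?T \<subseteq> relOf (J R)"
    proof
      fix p assume p: "p \<in> ?T"
      obtain a b where ab: "p = (a,b)" by (cases p)
      have "a \<in> V" "b \<in> V" using TV p ab by blast+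
      thus "p \<in> relOf (J R)" using a4 p ab by simp
    qed
    moreover have "trans (relOf (J R))"
    proof (rule transI)
      fix x y z assume "(x,y) \<in> relOf (J R)" "(y,z) \<in> relOf (J R)"
      moreover hence "x \<in> V" "y \<in> V" "z \<in> V" using RV by blast+
      ultimately show "(x,z) \<in> relOf (J R)" using a5[rule_format, of x z y] by simp
    qed
    ultimately have sub: "?T\<^sup>+ \<subseteq> relOf (J R)" by (rule tr_min)
    show "J R = lift2 (?T\<^sup>+)"
    proof (rule ccontr)
      assume n: "J R \<noteq> lift2 (?T\<^sup>+)"
      define U where "U = J(R := lift2 (?T\<^sup>+))"
      have riU: "rel_interp V arity U" unfolding U_def using ri by (rule ri_upd) (use lift2_sub[OF TpV] in auto)
      have ss: "lift2 (?T\<^sup>+) \<subseteq> J R" by (subst Req) (fact lift2_mono[OF sub])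
      moreover have "pred_less {R} U J" using n ss
        unfolding pred_less1 U_def by auto
      moreover have "holds_star V J {R} U F4"
        using a4 unfolding hsF4[OF ne] U_def by (simp add: r_into_trancl')
      moreover have "holds_star V J {R} U F5"
        using a5 unfolding hsF5[OF ne] U_def fun_upd_same lift2_mem by (blast intro: trancl_trans)
      ultimately have "rel_interp V arity U \<and> pred_less {R} U J \<and> holds_star V J {R} U (Conj F4 F5)"
        using riU by (simp add: holds_star_Conj)
      thus False using sm unfolding SM_def by blast
    qed
  next
    assume eq: "J R = lift2 (?T\<^sup>+)"
    have h: "holds V J (Conj F4 F5)" unfolding holds_Conj hF4[OF ne] hF5[OF ne] eq lift2_mem
    proof (intro conjI ballI impI)
      fix x y assume "[x,y] \<in> J In" thus "(x,y) \<in> ?T\<^sup>+" by (intro r_into_trancl) simp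
    next
      fix x y z assume "(x, z) \<in> ?T\<^sup>+ \<and> (z, y) \<in> ?T\<^sup>+"
      thus "(x,y) \<in> ?T\<^sup>+" by (elim conjE) (rule trancl_trans)
    qed
    have "\<not> (rel_interp V arity U \<and> pred_less {R} U J \<and> holds_star V J {R} U (Conj F4 F5))" for U
    proof
      assume a: "rel_interp V arity U \<and> pred_less {R} U J \<and> holds_star V J {R} U (Conj F4 F5)"
      have UV: "relOf (U R) \<subseteq> V \<times> V" using ri2(2)[of V U R] a by simp
      have "holds_star V J {R} U F4" "holds_star V J {R} U F5" using a by (auto simp: holds_star_Conj)
      hence s4: "\<forall>x\<in>V. \<forall>y\<in>V. [x,y] \<in> J In \<longrightarrow> [x,y] \<in> U R"
        and s5: "\<forall>x\<in>V. \<forall>y\<in>V. \<forall>z\<in>V. [x,z] \<in> U R \<and> [z,y] \<in> U R \<longrightarrow> [x,y] \<in> U R"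
        unfolding hsF4[OF ne] hsF5[OF ne] by blast+
      have "?T \<subseteq> relOf (U R)"
      proof
        fix p assume p: "p \<in> ?T"
        obtain a b where ab: "p = (a,b)" by (cases p)
        have "a \<in> V" "b \<in> V" using TV p ab by blast+
        thus "p \<in> relOf (U R)" using s4 p ab by simp
      qed
      moreover have "trans (relOf (U R))"
      proof (rule transI)
        fix x y z assume "(x,y) \<in> relOf (U R)" "(y,z) \<in> relOf (U R)"
        moreover hence "x \<in> V" "y \<in> V" "z \<in> V" using UV by blast+
        ultimately show "(x,z) \<in> relOf (U R)" using s5[rule_format, of x z y] by simp
      qed
      ultimately have "?T\<^sup>+ \<subseteq> relOf (U R)" by (rule tr_min)
      hence "J R \<subseteq> lift2 (relOf (U R))" unfolding eq by (rule lift2_mono)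
      also have "\<dots> = U R" by (rule ri2(1)[symmetric]) (use a in auto)
      finally have "J R \<subseteq> U R" .
      thus False using a by (auto simp: pred_less1)
    qed
    thus "SM V arity {R} (Conj F4 F5) J" using h unfolding SM_def by blast
  qed
qed

lemma sat_facts: "sat V J \<sigma> (foldr Conj (map (\<lambda>(a, b). Atom Edge [Cst a, Cst b]) xs) Top) = (\<forall>(a,b)\<in>set xs. [a,b] \<in> J Edge)"
  by (induction xs) (auto simp: Top_def)
lemma sat_star_facts: "sat_star V J {Edge} U \<sigma> (foldr Conj (map (\<lambda>(a, b). Atom Edge [Cst a, Cst b]) xs) Top) = (\<forall>(a,b)\<in>set xs. [a,b] \<in> U Edge)"
  by (induction xs) (auto simp: Top_def)
lemma preds_facts: "preds (foldr Conj (map (\<lambda>(a, b). Atom Edge [Cst a, Cst b]) xs) Top) \<subseteq> {Edge}"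
  by (induction xs) (auto simp: Top_def)

lemma set_some: "finite E \<Longrightarrow> set (SOME xs. set xs = E) = E"
  by (metis (mono_tags, lifting) finite_list someI_ex)

lemma SM_E:
  assumes ri: "rel_interp V arity J" and ne: "V \<noteq> {}" and fin: "finite E" and EV: "E \<subseteq> V \<times> V"
  shows "SM V arity {Edge} (edge_facts E) J \<longleftrightarrow> J Edge = lift2 E"
proof -
  have hs: "holds V J (edge_facts E) = (lift2 E \<subseteq> J Edge)"
    by (rule holds_const[OF ne]) (auto simp: edge_facts_def sat_facts set_some[OF fin] lift2_def)
  have hss: "holds_star V J {Edge} U (edge_facts E) = (lift2 E \<subseteq> U Edge)" for U
    by (rule holds_star_const[OF ne]) (auto simp: edge_facts_def sat_star_facts set_some[OF fin] lift2_def)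
  show ?thesis
  proof
    assume sm: "SM V arity {Edge} (edge_facts E) J"
    hence sub: "lift2 E \<subseteq> J Edge" using hs unfolding SM_def by blast
    show "J Edge = lift2 E"
    proof (rule ccontr)
      assume n: "J Edge \<noteq> lift2 E"
      define U where "U = J(Edge := lift2 E)"
      have "rel_interp V arity U" unfolding U_def using ri by (rule ri_upd) (use lift2_sub[OF EV] in auto)
      moreover have "pred_less {Edge} U J" using n sub by (auto simp: pred_less1 U_def)
      moreover have "holds_star V J {Edge} U (edge_facts E)" by (simp add: hss U_def)
      ultimately show False using sm unfolding SM_def by blast
    qed
  next
    assume eq: "J Edge = lift2 E"
    have "\<not> (rel_interp V arity U \<and> pred_less {Edge} U J \<and> holds_star V J {Edge} U (edge_facts E))" for U
      using eq hss by (auto simp: pred_less1)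
    thus "SM V arity {Edge} (edge_facts E) J" using hs eq unfolding SM_def by blast
  qed
qed



lemma relOf_lift2[simp]: "relOf (lift2 E) = E"
  unfolding relOf_def lift2_def by auto

lemma fp_cn: "(\<Union>M\<in>set [DefM {R} (Conj F4 F5), FormM F6]. fpreds M) = {R, In, Vertex}"
  by (auto simp: F4_def F5_def F6_def Neg_def)
lemma fp_cn2: "fpreds Pi_cn = {Vertex, In}"
  unfolding Pi_cn_def fpreds.simps(3) fp_cn by auto
lemma fp_hc: "(\<Union>M\<in>set [Pi_cn, FormM F7]. fpreds M) = {Vertex, In}"
  by (auto simp: fp_cn2 F7_def Neg_def)
lemma fp_hc2: "fpreds Pi_hc = {Vertex, In}"
  unfolding Pi_hc_def fpreds.simps(3) fp_hc by auto
lemma fp_sg: "(\<Union>M\<in>set [DefM {Vertex} (Conj F1 F2), DefM {In} F3]. fpreds M) = {Vertex, Edge, In}"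
  by (auto simp: F1_def F2_def F3_def Neg_def)
lemma fp_sg2: "fpreds Pi_sg = {Vertex, Edge, In}"
  unfolding Pi_sg_def fpreds.simps(3) fp_sg by auto
lemma fp_1: "(\<Union>M\<in>set [Pi_sg, Pi_hc]. fpreds M) = {Vertex, Edge, In}"
  by (auto simp: fp_sg2 fp_hc2)
lemma fp_12: "fpreds Pi_1 = {Edge, In}"
  unfolding Pi_1_def fpreds.simps(3) fp_1 by auto
lemma fp_E: "fpreds (M_E E) = {Edge}"
  using preds_facts unfolding M_E_def edge_facts_def by auto
lemma fp_top: "(\<Union>M\<in>set [Pi_1, M_E E]. fpreds M) = {Edge, In}"
  by (auto simp: fp_12 fp_E)

lemma phi_cn_unf: "phi V arity Pi_cn J = (\<exists>J4. rel_interp V arity J4 \<and> (\<forall>q. q \<noteq> R \<longrightarrow> J4 q = J q)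
   \<and> SM V arity {R} (Conj F4 F5) J4 \<and> holds V J4 F6)"
proof -
  have e: "(q \<notin> {R, In, Vertex} - {Vertex, In}) = (q \<noteq> R)" for q by auto
  show ?thesis unfolding Pi_cn_def phi.simps fp_cn e by simp
qed

lemma phi_hc_unf: "phi V arity Pi_hc J = (\<exists>J3. rel_interp V arity J3 \<and> (\<forall>q. J3 q = J q)
   \<and> phi V arity Pi_cn J3 \<and> holds V J3 F7)"
proof -
  have e: "(q \<notin> {Vertex, In} - {Vertex, In}) = True" for q by auto
  show ?thesis unfolding Pi_hc_def phi.simps(3) fp_hc e by (simp add: Pi_hc_def[symmetric])
qed

lemma phi_sg_unf: "phi V arity Pi_sg J = (\<exists>J3. rel_interp V arity J3 \<and> (\<forall>q. J3 q = J q)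
   \<and> SM V arity {Vertex} (Conj F1 F2) J3 \<and> SM V arity {In} F3 J3)"
proof -
  have e: "(q \<notin> {Vertex, Edge, In} - {Vertex, Edge, In}) = True" for q by auto
  show ?thesis unfolding Pi_sg_def phi.simps fp_sg e by simp
qed

lemma phi_1_unf: "phi V arity Pi_1 J = (\<exists>J1. rel_interp V arity J1 \<and> (\<forall>q. q \<noteq> Vertex \<longrightarrow> J1 q = J q)
   \<and> phi V arity Pi_sg J1 \<and> phi V arity Pi_hc J1)"
proof -
  have e: "(q \<notin> {Vertex, Edge, In} - {Edge, In}) = (q \<noteq> Vertex)" for q by auto
  show ?thesis unfolding Pi_1_def phi.simps(3) fp_1 e by simp
qed

lemma phi_top_unf: "phi V arity (Pi_1E E) I = (\<exists>J. rel_interp V arity J \<and> (\<forall>q. q \<noteq> Edge \<longrightarrow> J q = I q)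
   \<and> phi V arity Pi_1 J \<and> SM V arity {Edge} (edge_facts E) J)"
proof -
  have e: "(q \<notin> {Edge, In} - {In}) = (q \<noteq> Edge)" for q by auto
  show ?thesis unfolding Pi_1E_def phi.simps(3) fp_top e by (simp add: M_E_def)
qed

lemma fun_eqI': "(\<forall>q. J3 q = J q) \<Longrightarrow> J3 = J" by auto



lemma phi_cn_char:
  assumes ri: "rel_interp V arity J" and ne: "V \<noteq> {}"
  shows "phi V arity Pi_cn J \<longleftrightarrow> (\<forall>x\<in>V. \<forall>y\<in>V. [x] \<in> J Vertex \<and> [y] \<in> J Vertex \<longrightarrow> (x,y) \<in> (relOf (J In))\<^sup>+)"
proof
  assume "phi V arity Pi_cn J"
  then obtain J4 where ri4: "rel_interp V arity J4" and ag: "\<forall>q. q \<noteq> R \<longrightarrow> J4 q = J q"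
    and sm: "SM V arity {R} (Conj F4 F5) J4" and h6: "holds V J4 F6" unfolding phi_cn_unf by blast
  have "J4 R = lift2 ((relOf (J4 In))\<^sup>+)" using SM_R[OF ri4 ne] sm by blast
  moreover have "J4 In = J In" "J4 Vertex = J Vertex" using ag by auto
  ultimately show "\<forall>x\<in>V. \<forall>y\<in>V. [x] \<in> J Vertex \<and> [y] \<in> J Vertex \<longrightarrow> (x,y) \<in> (relOf (J In))\<^sup>+"
    using h6 unfolding hF6[OF ne] by simp
next
  assume a: "\<forall>x\<in>V. \<forall>y\<in>V. [x] \<in> J Vertex \<and> [y] \<in> J Vertex \<longrightarrow> (x,y) \<in> (relOf (J In))\<^sup>+"
  let ?T = "relOf (J In)"
  have TV: "?T \<subseteq> V \<times> V" using ri2(2)[OF ri, of In] by simp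
  hence TpV: "?T\<^sup>+ \<subseteq> V \<times> V" using trancl_subset_Sigma by blast
  define J4 where "J4 = J(R := lift2 (?T\<^sup>+))"
  have ri4: "rel_interp V arity J4" unfolding J4_def using ri by (rule ri_upd) (use lift2_sub[OF TpV] in auto)
  have "J4 In = J In" "J4 Vertex = J Vertex" "J4 R = lift2 (?T\<^sup>+)" unfolding J4_def by auto
  hence "SM V arity {R} (Conj F4 F5) J4" "holds V J4 F6"
    using SM_R[OF ri4 ne] a unfolding hF6[OF ne] by auto
  moreover have "\<forall>q. q \<noteq> R \<longrightarrow> J4 q = J q" unfolding J4_def by auto
  ultimately show "phi V arity Pi_cn J" unfolding phi_cn_unf using ri4 by blast
qed

lemma phi_hc_char:
  assumes ri: "rel_interp V arity J"
  shows "phi V arity Pi_hc J \<longleftrightarrow> phi V arity Pi_cn J \<and> holds V J F7"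
  unfolding phi_hc_unf using ri by (metis fun_eqI')

lemma phi_sg_char:
  assumes ri: "rel_interp V arity J"
  shows "phi V arity Pi_sg J \<longleftrightarrow> SM V arity {Vertex} (Conj F1 F2) J \<and> SM V arity {In} F3 J"
  unfolding phi_sg_unf using ri by (metis fun_eqI')

definition good :: "'a set \<Rightarrow> ('a \<times> 'a) set \<Rightarrow> ('a \<times> 'a) set \<Rightarrow> bool" where
  "good V E C = (C \<subseteq> E \<and> (\<forall>x y z. (x,y) \<in> C \<longrightarrow> (x,z) \<in> C \<longrightarrow> y = z) \<and> V \<times> V \<subseteq> C\<^sup>+)"

lemma main_char:
  fixes V :: "'a set" and E :: "('a \<times> 'a) set" and I :: "pred \<Rightarrow> 'a list set"
  assumes fin: "finite V" and ne: "V \<noteq> {}" and EV: "E \<subseteq> V \<times> V"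
    and ends: "\<forall>v\<in>V. \<exists>(a, b)\<in>E. v = a \<or> v = b"
    and hI: "herbrand_over V arity {In} I"
  shows "answer_set V arity (Pi_1E E) I \<longleftrightarrow> good V E (relOf (I In))"
proof -
  have riI: "rel_interp V arity I" using hI unfolding herbrand_over_def by blast
  have finE: "finite E" using fin EV by (meson finite_SigmaI finite_subset)
  have ends2: "\<forall>v\<in>V. \<exists>w\<in>V. [v,w] \<in> lift2 E \<or> [w,v] \<in> lift2 E"
  proof
    fix v assume "v \<in> V"
    then obtain a b where ab: "(a,b) \<in> E" "v = a \<or> v = b" using ends by blast
    hence "a \<in> V" "b \<in> V" using EV by auto
    thus "\<exists>w\<in>V. [v,w] \<in> lift2 E \<or> [w,v] \<in> lift2 E" using ab by auto
  qed
  have pub: "publics (Pi_1E E) = {In}" unfolding Pi_1E_def by simp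
  have "phi V arity (Pi_1E E) I \<longleftrightarrow> good V E (relOf (I In))"
  proof
    assume "phi V arity (Pi_1E E) I"
    then obtain J where ri: "rel_interp V arity J" and ag: "\<forall>q. q \<noteq> Edge \<longrightarrow> J q = I q"
      and p1: "phi V arity Pi_1 J" and sme: "SM V arity {Edge} (edge_facts E) J"
      unfolding phi_top_unf by blast
    have JE: "J Edge = lift2 E" using SM_E[OF ri ne finE EV] sme by blast
    obtain J1 where ri1: "rel_interp V arity J1" and ag1: "\<forall>q. q \<noteq> Vertex \<longrightarrow> J1 q = J q"
      and sg: "phi V arity Pi_sg J1" and hc: "phi V arity Pi_hc J1"
      using p1 unfolding phi_1_unf by blast
    have J1E: "J1 Edge = lift2 E" using ag1 JE by simp
    have J1I: "J1 In = I In" using ag1 ag by simp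
    have smv: "SM V arity {Vertex} (Conj F1 F2) J1" and smi: "SM V arity {In} F3 J1"
      using sg phi_sg_char[OF ri1] by auto
    have J1V: "J1 Vertex = {[v] | v. v \<in> V}" using SM_Vertex[OF ri1 ne] smv ends2 J1E by simp
    have sub: "relOf (I In) \<subseteq> E" using SM_In[OF ri1 ne] smi J1E J1I by simp
    have cn: "phi V arity Pi_cn J1" and h7: "holds V J1 F7" using hc phi_hc_char[OF ri1] by auto
    have fnc: "\<forall>x y z. (x,y) \<in> relOf (I In) \<longrightarrow> (x,z) \<in> relOf (I In) \<longrightarrow> y = z"
    proof (intro allI impI)
      fix x y z assume xy: "(x,y) \<in> relOf (I In)" and xz: "(x,z) \<in> relOf (I In)"
      hence "x \<in> V" "y \<in> V" "z \<in> V" using sub EV by blast+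
      thus "y = z" using h7 xy xz J1I unfolding hF7[OF ne] by simp
    qed
    have "V \<times> V \<subseteq> (relOf (I In))\<^sup>+"
    proof
      fix p assume p: "p \<in> V \<times> V"
      obtain x y where "p = (x,y)" by (cases p)
      thus "p \<in> (relOf (I In))\<^sup>+" using cn phi_cn_char[OF ri1 ne] p J1V J1I by auto
    qed
    thus "good V E (relOf (I In))" unfolding good_def using sub fnc by blast
  next
    assume g: "good V E (relOf (I In))"
    define J where "J = I(Edge := lift2 E)"
    define J1 where "J1 = J(Vertex := {[v] | v. v \<in> V})"
    have ri: "rel_interp V arity J" unfolding J_def using riI by (rule ri_upd) (use lift2_sub[OF EV] in auto)
    have ri1: "rel_interp V arity J1" unfolding J1_def using ri by (rule ri_upd) auto
    have JE: "J Edge = lift2 E" and J1E: "J1 Edge = lift2 E" and J1I: "J1 In = I In"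
      and J1V: "J1 Vertex = {[v] | v. v \<in> V}" unfolding J1_def J_def by auto
    have sme: "SM V arity {Edge} (edge_facts E) J" using SM_E[OF ri ne finE EV] JE by blast
    have smv: "SM V arity {Vertex} (Conj F1 F2) J1" using SM_Vertex[OF ri1 ne] ends2 J1E J1V by simp
    have smi: "SM V arity {In} F3 J1" using SM_In[OF ri1 ne] g J1E J1I unfolding good_def by simp
    have h7: "holds V J1 F7" unfolding hF7[OF ne] J1I using g unfolding good_def relOf_def by blast
    have cn: "phi V arity Pi_cn J1" using phi_cn_char[OF ri1 ne] g J1I J1V unfolding good_def by auto
    have p1: "phi V arity Pi_1 J"
      unfolding phi_1_unf
    proof (intro exI conjI)
      show "rel_interp V arity J1" by fact
      show "\<forall>q. q \<noteq> Vertex \<longrightarrow> J1 q = J q" unfolding J1_def by simp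
      show "phi V arity Pi_sg J1" using phi_sg_char[OF ri1] smv smi by blast
      show "phi V arity Pi_hc J1" using phi_hc_char[OF ri1] cn h7 by blast
    qed
    show "phi V arity (Pi_1E E) I" unfolding phi_top_unf
    proof (intro exI conjI)
      show "rel_interp V arity J" by fact
      show "\<forall>q. q \<noteq> Edge \<longrightarrow> J q = I q" unfolding J_def by simp
    qed fact+
  qed
  thus ?thesis unfolding answer_set_def pub using hI by blast
qed



lemma cyc_to_good:
  fixes vs :: "'a list"
  assumes ne: "vs \<noteq> []" and d: "distinct vs"
    and Ceq: "C = {(vs ! i, vs ! ((i + 1) mod length vs)) | i. i < length vs}"
  shows "(\<forall>x y z. (x,y) \<in> C \<longrightarrow> (x,z) \<in> C \<longrightarrow> y = z) \<and> set vs \<times> set vs \<subseteq> C\<^sup>+"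
proof -
  let ?n = "length vs"
  have n0: "0 < ?n" using ne by simp
  have inC: "i < ?n \<Longrightarrow> (vs ! i, vs ! ((i + 1) mod ?n)) \<in> C" for i using Ceq by blast
  have fn: "\<forall>x y z. (x,y) \<in> C \<longrightarrow> (x,z) \<in> C \<longrightarrow> y = z"
  proof (intro allI impI)
    fix x y z assume "(x,y) \<in> C" "(x,z) \<in> C"
    then obtain i j where ij: "i < ?n" "j < ?n" "x = vs ! i" "y = vs ! ((i + 1) mod ?n)"
      "x = vs ! j" "z = vs ! ((j + 1) mod ?n)" using Ceq by auto
    hence "i = j" using d nth_eq_iff_index_eq by metis
    thus "y = z" using ij by simp
  qed
  have step: "i < ?n \<Longrightarrow> (vs ! i, vs ! ((i + Suc k) mod ?n)) \<in> C\<^sup>+" for i k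
  proof (induction k)
    case 0
    then show ?case using inC[of i] by auto
  next
    case (Suc k)
    have m: "(i + Suc k) mod ?n < ?n" using n0 by simp
    have "((i + Suc k) mod ?n + 1) mod ?n = (i + Suc (Suc k)) mod ?n"
      by (simp add: mod_Suc_eq)
    hence "(vs ! ((i + Suc k) mod ?n), vs ! ((i + Suc (Suc k)) mod ?n)) \<in> C" using inC[OF m] by simp
    thus ?case using Suc by (meson trancl_into_trancl)
  qed
  have "set vs \<times> set vs \<subseteq> C\<^sup>+"
  proof
    fix p assume "p \<in> set vs \<times> set vs"
    then obtain i j where ij: "i < ?n" "j < ?n" "p = (vs ! i, vs ! j)" by (auto simp: in_set_conv_nth)
    have e1: "i + Suc (?n - i + j - 1) = ?n + j" using ij by simp
    have "(i + Suc (?n - i + j - 1)) mod ?n = j" unfolding e1 using ij by simp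
    thus "p \<in> C\<^sup>+" using step[OF ij(1), of "?n - i + j - 1"] ij by simp
  qed
  thus ?thesis using fn by blast
qed

lemma funpow_mult_id: "(f ^^ p) v = v \<Longrightarrow> (f ^^ (m * p)) v = v"
proof (induction m)
  case (Suc m)
  have "(f ^^ (Suc m * p)) v = (f ^^ p) ((f ^^ (m * p)) v)" by (simp add: funpow_add)
  thus ?case using Suc by simp
qed simp

lemma funpow_period: "(f ^^ p) v = v \<Longrightarrow> (f ^^ k) v = (f ^^ (k mod p)) v"
proof -
  assume a: "(f ^^ p) v = v"
  have "(f ^^ k) v = (f ^^ (k mod p + k div p * p)) v" by simp
  also have "\<dots> = (f ^^ (k mod p)) ((f ^^ (k div p * p)) v)" by (simp only: funpow_add comp_apply)
  also have "\<dots> = (f ^^ (k mod p)) v" using funpow_mult_id[OF a] by simp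
  finally show ?thesis .
qed

lemma good_to_cyc:
  assumes fin: "finite V" and ne: "V \<noteq> {}" and CV: "C \<subseteq> V \<times> V"
    and fn: "\<forall>x y z. (x,y) \<in> C \<longrightarrow> (x,z) \<in> C \<longrightarrow> y = z" and tc: "V \<times> V \<subseteq> C\<^sup>+"
  shows "\<exists>vs. vs \<noteq> [] \<and> distinct vs \<and> set vs = V \<and>
       C = {(vs ! i, vs ! ((i + 1) mod length vs)) | i. i < length vs}"
proof -
  define f where "f v = (SOME w. (v,w) \<in> C)" for v
  have fC: "(v, f v) \<in> C" if "v \<in> V" for v
  proof -
    have "(v,v) \<in> C\<^sup>+" using tc that by blast
    then obtain w where "(v,w) \<in> C" using tranclD by metis
    thus ?thesis unfolding f_def by (rule someI)
  qed
  have fu: "(v,w) \<in> C \<Longrightarrow> w = f v" for v w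
  proof -
    assume a: "(v,w) \<in> C"
    hence "v \<in> V" using CV by blast
    thus "w = f v" using fC fn a by blast
  qed
  have fV: "v \<in> V \<Longrightarrow> f v \<in> V" for v using fC CV by blast
  have itV: "v \<in> V \<Longrightarrow> (f ^^ k) v \<in> V" for v k by (induction k) (auto simp: fV)
  have reach: "(x,y) \<in> C\<^sup>+ \<Longrightarrow> \<exists>k>0. y = (f ^^ k) x" for x y
  proof (induction rule: trancl_induct)
    case (base y)
    have "y = (f ^^ 1) x" using base fu by simp
    then show ?case by blast
  next
    case (step y z)
    then obtain k where "k > 0" "y = (f ^^ k) x" by blast
    moreover have "z = f y" using step fu by blast
    ultimately have "z = (f ^^ Suc k) x" by simp
    thus ?case by blast
  qed
  obtain v0 where v0: "v0 \<in> V" using ne by blast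
  have "(v0,v0) \<in> C\<^sup>+" using tc v0 by blast
  then obtain k0 where k0: "k0 > 0" "(f ^^ k0) v0 = v0" using reach by metis
  define p where "p = (LEAST k. 0 < k \<and> (f ^^ k) v0 = v0)"
  have pP: "0 < p \<and> (f ^^ p) v0 = v0" unfolding p_def by (rule LeastI[of _ k0]) (use k0 in blast)
  hence p0: "0 < p" and pv: "(f ^^ p) v0 = v0" by auto
  have pmin: "0 < k \<Longrightarrow> (f ^^ k) v0 = v0 \<Longrightarrow> p \<le> k" for k unfolding p_def by (rule Least_le) blast
  define g where "g i = (f ^^ i) v0" for i
  have gper: "g k = g (k mod p)" for k unfolding g_def using funpow_period[OF pv] by blast
  have gV: "g i \<in> V" for i unfolding g_def using itV v0 by blast
  have gS: "g (Suc i) = f (g i)" for i unfolding g_def by simp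
  have Vsub: "V \<subseteq> g ` {0..<p}"
  proof
    fix v assume "v \<in> V"
    hence "(v0,v) \<in> C\<^sup>+" using tc v0 by blast
    then obtain k where "v = g k" using reach unfolding g_def by blast
    hence "v = g (k mod p)" using gper by simp
    moreover have "k mod p < p" using p0 by simp
    ultimately show "v \<in> g ` {0..<p}" by auto
  qed
  have inj: "inj_on g {0..<p}"
  proof (rule inj_onI, rule ccontr)
    fix i j assume i: "i \<in> {0..<p}" and j: "j \<in> {0..<p}" and e: "g i = g j" and n: "i \<noteq> j"
    have gen: "False" if ij: "i < j" "j < p" "g i = g j" for i j
    proof -
      have "(f ^^ (p - j + i)) v0 = (f ^^ (p - j)) (g i)" unfolding g_def by (simp add: funpow_add)
      also have "\<dots> = (f ^^ (p - j)) (g j)" using ij by simp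
      also have "\<dots> = (f ^^ (p - j + j)) v0" unfolding g_def by (simp only: funpow_add comp_apply)
      also have "\<dots> = (f ^^ p) v0" using ij by simp
      finally have "(f ^^ (p - j + i)) v0 = v0" using pv by simp
      hence "p \<le> p - j + i" using pmin ij by simp
      thus False using ij by simp
    qed
    show False using gen[of i j] gen[of j i] i j e n by (cases "i < j") auto
  qed
  have Veq: "V = g ` {0..<p}" using Vsub gV by auto
  define vs where "vs = map g [0..<p]"
  have lv: "length vs = p" unfolding vs_def by simp
  have nth: "i < p \<Longrightarrow> vs ! i = g i" for i unfolding vs_def by simp
  have "vs \<noteq> []" using p0 lv by auto
  moreover have "distinct vs" unfolding vs_def using inj by (simp add: distinct_map)
  moreover have "set vs = V" unfolding vs_def Veq by simp
  moreover have "C = {(vs ! i, vs ! ((i + 1) mod length vs)) | i. i < length vs}"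
  proof
    show "C \<subseteq> {(vs ! i, vs ! ((i + 1) mod length vs)) | i. i < length vs}"
    proof
      fix q assume q: "q \<in> C"
      obtain x y where xy: "q = (x,y)" by (cases q)
      have "x \<in> V" using q xy CV by blast
      then obtain i where i: "i < p" "x = g i" using Veq by auto
      have "y = f x" using fu q xy by blast
      hence "y = g (Suc i)" using gS i by simp
      hence "y = g ((i + 1) mod p)" using gper by simp
      moreover have "(i + 1) mod p < p" using p0 by simp
      ultimately have "q = (vs ! i, vs ! ((i + 1) mod length vs))" using xy i nth lv by simp
      thus "q \<in> {(vs ! i, vs ! ((i + 1) mod length vs)) | i. i < length vs}" using i lv by blast
    qed
  next
    show "{(vs ! i, vs ! ((i + 1) mod length vs)) | i. i < length vs} \<subseteq> C"
    proof
      fix q assume "q \<in> {(vs ! i, vs ! ((i + 1) mod length vs)) | i. i < length vs}"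
      then obtain i where i: "i < p" "q = (vs ! i, vs ! ((i + 1) mod p))" using lv by auto
      have m: "(i + 1) mod p < p" using p0 by simp
      have "q = (g i, g ((i+1) mod p))" using i nth m by simp
      also have "\<dots> = (g i, f (g i))" using gper[of "Suc i"] gS by simp
      finally show "q \<in> C" using fC gV by simp
    qed
  qed
  ultimately show ?thesis by blast
qed

theorem proposition5:
  fixes V :: "'a set" and E :: "('a \<times> 'a) set" and I :: "pred \<Rightarrow> 'a list set"
  assumes "finite V" and "V \<noteq> {}" and "E \<subseteq> V \<times> V"
    and "\<forall>v\<in>V. \<exists>(a, b)\<in>E. v = a \<or> v = b"
    and "herbrand_over V arity {In} I"
  shows "answer_set V arity (Pi_1E E) I \<longleftrightarrow> ham_cycle V E {(x, y). [x, y] \<in> I In}"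
proof -
  have Ceq: "{(x, y). [x, y] \<in> I In} = relOf (I In)" unfolding relOf_def by simp
  have riI: "rel_interp V arity I" using assms(5) unfolding herbrand_over_def by blast
  have CV: "relOf (I In) \<subseteq> V \<times> V" using ri2(2)[OF riI, of In] by simp
  have "good V E (relOf (I In)) \<longleftrightarrow> ham_cycle V E (relOf (I In))"
  proof
    assume g: "good V E (relOf (I In))"
    show "ham_cycle V E (relOf (I In))" unfolding ham_cycle_def
      using g good_to_cyc[OF assms(1) assms(2) CV] unfolding good_def by blast
  next
    assume h: "ham_cycle V E (relOf (I In))"
    then obtain vs where vs: "vs \<noteq> []" "distinct vs" "set vs = V"
      "relOf (I In) = {(vs ! i, vs ! ((i + 1) mod length vs)) | i. i < length vs}"
      and sub: "relOf (I In) \<subseteq> E" unfolding ham_cycle_def by blast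
    show "good V E (relOf (I In))" unfolding good_def
      using cyc_to_good[OF vs(1) vs(2) vs(4)] vs(3) sub by blast
  qed
  thus ?thesis using main_char[OF assms] Ceq by simp
qed

end
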